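(* For all $q\in Q$, $\overline p'(q)<0$.
   Context: Let $0<q_\ell<q_h<\infty$, $Q=[q_\ell,q_h]$, and let $c$ be a real number with $0<c<q_\ell$. Let $F$ be a probability distribution on $[0,1]$ with support $[0,1]$ admitting a twice continuously differentiable density $f:(0,1)\to\mathbb{R}_{>0}$. Define $r(v)=(1-F(v))/f(v)$ and $\psi(v)=v-r(v)$ on $(0,1)$, and assume $\psi'(v)>0$ whenever $\psi(v)>0$. For $q\in Q$, $p(q)$ is the unique maximizer over $p\in\mathbb{R}$ of $(p-c)\big(1-F(p/q)\big)$, and $\overline p(q)=p(q)/q$. *)

theory Defs
  imports "HOL-Analysis.Analysis"
begin

definition rfun :: "(real \<Rightarrow> real) \<Rightarrow> (real \<Rightarrow> real) \<Rightarrow> real \<Rightarrow> real" where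
  "rfun F f v = (1 - F v) / f v"

definition psi :: "(real \<Rightarrow> real) \<Rightarrow> (real \<Rightarrow> real) \<Rightarrow> real \<Rightarrow> real" where
  "psi F f v = v - rfun F f v"

definition profit :: "(real \<Rightarrow> real) \<Rightarrow> real \<Rightarrow> real \<Rightarrow> real \<Rightarrow> real" where
  "profit F c q p = (p - c) * (1 - F (p / q))"

definition popt :: "(real \<Rightarrow> real) \<Rightarrow> real \<Rightarrow> real \<Rightarrow> real" where
  "popt F c q = (THE p. \<forall>p'. profit F c q p' \<le> profit F c q p)"

definition pbar :: "(real \<Rightarrow> real) \<Rightarrow> real \<Rightarrow> real \<Rightarrow> real" where
  "pbar F c q = popt F c q / q"

end

theory Submission
  imports Defs
begin

context
  fixes F f :: "real \<Rightarrow> real" and c :: real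
  assumes c0: "0 < c"
    and F_low: "\<forall>v\<le>0. F v = 0"
    and F_high: "\<forall>v\<ge>1. F v = 1"
    and F_cont: "continuous_on UNIV F"
    and F_dens: "\<forall>v\<in>{0<..<1}. (F has_real_derivative f v) (at v)"
    and f_pos: "\<forall>v\<in>{0<..<1}. f v > 0"
    and f_diff: "\<forall>v\<in>{0<..<1}. f differentiable (at v)"
    and psi_mono: "\<forall>v\<in>{0<..<1}. psi F f v > 0 \<longrightarrow> deriv (psi F f) v > 0"
begin

lemma F_bounds:
  assumes "0 < v" "v < 1" shows "0 < F v \<and> F v < 1"
proof
  have D: "\<And>x. 0<x \<Longrightarrow> x<1 \<Longrightarrow> \<exists>y. DERIV F x :> y \<and> y > 0"
    using F_dens f_pos by force
  have "F 0 < F v"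
    by (rule DERIV_pos_imp_increasing_open[OF assms(1)])
      (use D assms in \<open>auto intro: continuous_on_subset[OF F_cont]\<close>)
  thus "0 < F v" using F_low by auto
  have "F v < F 1"
    by (rule DERIV_pos_imp_increasing_open[OF assms(2)])
      (use D assms in \<open>auto intro: continuous_on_subset[OF F_cont]\<close>)
  thus "F v < 1" using F_high by auto
qed

lemma F_le1: "F v \<le> 1"
  using F_bounds[of v] F_low F_high by (cases "v \<le> 0"; cases "v \<ge> 1") auto

lemma psi_eq: "psi F f = (\<lambda>v. v - (1 - F v) / f v)"
  by (auto simp: fun_eq_iff psi_def rfun_def)

lemma psi_deriv:
  assumes "0 < v" "v < 1"
  shows "(psi F f has_real_derivative deriv (psi F f) v) (at v)"
proof -
  obtain f1 where f1: "(f has_real_derivative f1) (at v)"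
    using f_diff assms real_differentiable_def by force
  have Fd: "(F has_real_derivative f v) (at v)" using F_dens assms by auto
  have "f v \<noteq> 0" using f_pos assms by force
  have Fdi: "F differentiable (at v)" using Fd real_differentiable_def by blast
  have fdi: "f differentiable (at v)" using f_diff assms by auto
  have "psi F f differentiable (at v)"
    unfolding psi_eq
    by (rule derivative_intros Fdi fdi \<open>f v \<noteq> 0\<close>)+
  then show ?thesis using DERIV_deriv_iff_real_differentiable by blast
qed

lemma psi_isCont: "0 < v \<Longrightarrow> v < 1 \<Longrightarrow> isCont (psi F f) v"
  using psi_deriv DERIV_isCont by blast

lemma psi_strict:
  assumes v: "0 < v1" "v1 < v2" "v2 < 1" and p: "psi F f v1 > 0"
  shows "psi F f v1 < psi F f v2"
proof (rule ccontr)
  assume neg: "\<not> psi F f v1 < psi F f v2"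
  have cont: "continuous_on {v1..v2} (psi F f)"
    using v by (intro continuous_at_imp_continuous_on) (auto intro!: psi_isCont)
  obtain m where m: "m \<in> {v1..v2}" "\<forall>y\<in>{v1..v2}. psi F f y \<le> psi F f m"
    using continuous_attains_sup[OF compact_Icc _ cont] v by fastforce
  have dpos: "deriv (psi F f) v1 > 0" using psi_mono v p by auto
  obtain d where d: "d > 0" "\<forall>h>0. h < d \<longrightarrow> psi F f v1 < psi F f (v1 + h)"
    using DERIV_pos_inc_right[OF psi_deriv dpos] v by force
  define h where "h = min (d/2) ((v2 - v1)/2)"
  have h: "h > 0" "h < d" "v1 + h < v2" using d(1) v unfolding h_def by (auto simp: min_def field_simps)
  have "psi F f v1 < psi F f (v1 + h)" using d h by auto
  also have "\<dots> \<le> psi F f m" using m h by auto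
  finally have lt: "psi F f v1 < psi F f m" .
  hence mne: "m \<noteq> v1" "m \<noteq> v2" using neg by auto
  hence mi: "v1 < m" "m < v2" using m by auto
  have "deriv (psi F f) m > 0" using psi_mono mi v lt p by auto
  moreover have "deriv (psi F f) m = 0"
  proof (rule DERIV_local_max[OF psi_deriv])
    show "0 < min (m - v1) (v2 - m)" using mi by auto
    show "\<forall>y. \<bar>m - y\<bar> < min (m - v1) (v2 - m) \<longrightarrow> psi F f y \<le> psi F f m"
      using m(2) by (auto simp: abs_if split: if_splits)
  qed (use mi v in auto)
  ultimately show False by simp
qed

lemma root_unique:
  assumes "0 < v1" "v1 < 1" "0 < v2" "v2 < 1" "psi F f v1 = a" "psi F f v2 = a" "a > 0"
  shows "v1 = v2"
  using psi_strict[of v1 v2] psi_strict[of v2 v1] assms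
  by (cases v1 v2 rule: linorder_cases) auto

lemma psi_lt: assumes "0 < v" "v < 1" shows "psi F f v < v"
proof -
  have "(1 - F v) / f v > 0" using F_bounds[OF assms] f_pos assms by auto
  thus ?thesis by (simp add: psi_def rfun_def)
qed

lemma profit_pos_range:
  assumes q: "c < q" and pp: "profit F c q p > 0"
  shows "c < p \<and> p < q"
proof -
  have q0: "q > 0" using q c0 by auto
  have "\<not> p \<ge> q"
  proof
    assume "p \<ge> q" hence "p / q \<ge> 1" using q0 by (simp add: field_simps)
    hence "F (p/q) = 1" using F_high by auto
    thus False using pp by (simp add: profit_def)
  qed
  moreover have "\<not> p \<le> c"
  proof
    assume "p \<le> c"
    moreover have "1 - F (p/q) \<ge> 0" using F_le1 by simp
    ultimately have "profit F c q p \<le> 0" unfolding profit_def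
      by (simp add: mult_nonpos_nonneg)
    thus False using pp by simp
  qed
  ultimately show ?thesis by auto
qed

lemma profit_crit:
  assumes q: "c < q" and p: "c < p" "p < q"
    and mx: "\<forall>y\<in>{c..q}. profit F c q y \<le> profit F c q p"
  shows "psi F f (p/q) = c/q"
proof -
  have q0: "q > 0" using q c0 by auto
  define v where "v = p / q"
  have v: "0 < v" "v < 1" using p q0 c0 by (auto simp: v_def field_simps)
  have Fd: "(F has_real_derivative f v) (at v)" using F_dens v by auto
  have Fd2: "((\<lambda>x. F (x/q)) has_real_derivative f v * (1/q)) (at p)"
  proof -
    have "((\<lambda>x. x/q) has_real_derivative 1/q) (at p)"
      using q0 by (auto intro!: derivative_eq_intros)
    from DERIV_chain2[OF Fd[unfolded v_def] this] show ?thesis unfolding v_def .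
  qed
  have D: "(profit F c q has_real_derivative (1 - F v) + (p - c) * (- (f v * (1/q)))) (at p)"
    unfolding profit_def[abs_def] v_def
    by (rule derivative_eq_intros Fd2[unfolded v_def] | simp)+
  have "(1 - F v) + (p - c) * (- (f v * (1/q))) = 0"
  proof (rule DERIV_local_max[OF D])
    show "0 < min (p - c) (q - p)" using p by auto
    show "\<forall>y. \<bar>p - y\<bar> < min (p - c) (q - p) \<longrightarrow> profit F c q y \<le> profit F c q p"
      using mx by (auto simp: abs_if split: if_splits)
  qed
  moreover have "f v > 0" using f_pos v by auto
  ultimately have "(1 - F v) / f v = (p - c) / q" by (simp add: field_simps)
  moreover have "p / q - (p - c)/q = c / q" using q0 by (simp add: field_simps)
  ultimately show ?thesis by (simp add: psi_def rfun_def v_def)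
qed

lemma pbar_root:
  assumes q: "c < q"
  shows "0 < pbar F c q \<and> pbar F c q < 1 \<and> psi F f (pbar F c q) = c / q"
proof -
  have q0: "q > 0" using q c0 by auto
  have cont: "continuous_on {c..q} (profit F c q)"
    unfolding profit_def[abs_def]
    using q0 by (intro continuous_intros continuous_on_compose2[OF F_cont]) auto
  obtain pm where pm: "pm \<in> {c..q}" "\<forall>y\<in>{c..q}. profit F c q y \<le> profit F c q pm"
    using continuous_attains_sup[OF compact_Icc _ cont] q by fastforce
  define mid where "mid = (c + q) / 2"
  have mid: "c < mid" "mid < q" using q by (auto simp: mid_def)
  have "0 < mid / q" "mid / q < 1" using mid q0 c0 by (auto simp: field_simps)
  hence "F (mid/q) < 1" using F_bounds by auto
  hence "profit F c q mid > 0" using mid by (simp add: profit_def)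
  hence ppos: "profit F c q pm > 0" using pm mid by (smt (verit) atLeastAtMost_iff)
  have glob: "\<forall>y. profit F c q y \<le> profit F c q pm"
  proof
    fix y show "profit F c q y \<le> profit F c q pm"
    proof (cases "profit F c q y > 0")
      case True
      then show ?thesis using profit_pos_range[OF q True] pm by auto
    qed (use ppos in auto)
  qed
  have pmr: "c < pm \<and> pm < q" using profit_pos_range[OF q ppos] .
  have root: "psi F f (pm/q) = c/q" using profit_crit[OF q _ _ pm(2)] pmr by auto
  have vr: "0 < pm/q" "pm/q < 1" using pmr q0 c0 by (auto simp: field_simps)
  have "popt F c q = pm"
    unfolding popt_def
  proof (rule the_equality)
    show "\<forall>p'. profit F c q p' \<le> profit F c q pm" by (rule glob)
  next
    fix p assume pa: "\<forall>p'. profit F c q p' \<le> profit F c q p"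
    hence pp: "profit F c q p > 0" using ppos by (smt (verit))
    have pr: "c < p \<and> p < q" using profit_pos_range[OF q pp] .
    have "psi F f (p/q) = c/q" using profit_crit[OF q _ _] pr pa by auto
    moreover have "0 < p/q" "p/q < 1" using pr q0 c0 by (auto simp: field_simps)
    ultimately have "p/q = pm/q"
      using root_unique[of "p/q" "pm/q" "c/q"] root vr q0 c0 by auto
    thus "p = pm" using q0 by simp
  qed
  thus ?thesis using root vr by (simp add: pbar_def)
qed

lemma pbar_inv:
  assumes "0 < z" "z < 1" "psi F f z > 0"
  shows "pbar F c (c / psi F f z) = z"
proof -
  have lt: "psi F f z < 1" using psi_lt assms by force
  have q: "c < c / psi F f z" using lt assms c0 by (simp add: field_simps)
  from pbar_root[OF q] have "0 < pbar F c (c / psi F f z)" "pbar F c (c / psi F f z) < 1"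
    "psi F f (pbar F c (c / psi F f z)) = psi F f z" using assms c0 by auto
  thus ?thesis using root_unique assms by blast
qed

end
theorem lemma1:
  fixes F f :: "real \<Rightarrow> real" and c ql qh :: real
  assumes Q: "0 < ql" "ql < qh"
    and c: "0 < c" "c < ql"
    and F_low: "\<forall>v\<le>0. F v = 0"
    and F_high: "\<forall>v\<ge>1. F v = 1"
    and F_cont: "continuous_on UNIV F"
    and F_dens: "\<forall>v\<in>{0<..<1}. (F has_real_derivative f v) (at v)"
    and f_pos: "\<forall>v\<in>{0<..<1}. f v > 0"
    and f_C2: "\<exists>f1 f2. (\<forall>v\<in>{0<..<1}. (f has_real_derivative f1 v) (at v)
                                 \<and> (f1 has_real_derivative f2 v) (at v))
                     \<and> continuous_on {0<..<1} f2"
    and psi_mono: "\<forall>v\<in>{0<..<1}. psi F f v > 0 \<longrightarrow> deriv (psi F f) v > 0"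
  shows "\<forall>q\<in>{ql..qh}. \<exists>D. (pbar F c has_real_derivative D) (at q within {ql..qh}) \<and> D < 0"
proof
  fix q0 assume q0: "q0 \<in> {ql..qh}"
  have f_diff: "\<forall>v\<in>{0<..<1}. f differentiable (at v)"
    using f_C2 real_differentiable_def by blast
  note L = pbar_root[OF c(1) F_low F_high F_cont F_dens f_pos f_diff psi_mono]
    pbar_inv[OF c(1) F_low F_high F_cont F_dens f_pos f_diff psi_mono]
    psi_deriv[OF c(1) F_low F_high F_cont F_dens f_pos f_diff psi_mono]
    psi_isCont[OF c(1) F_low F_high F_cont F_dens f_pos f_diff psi_mono]
  have cq: "c < q0" using q0 c Q by auto
  have qpos: "q0 > 0" using cq c by auto
  define v0 where "v0 = pbar F c q0"
  have v0: "0 < v0" "v0 < 1" "psi F f v0 = c / q0" using L(1)[OF cq] by (auto simp: v0_def)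
  define y0 where "y0 = c / q0"
  have y0: "0 < y0" "y0 < 1" using cq c qpos by (auto simp: y0_def field_simps)
  define h where "h = (\<lambda>y. pbar F c (c / y))"
  define D where "D = deriv (psi F f) v0"
  have Dpos: "D > 0" using psi_mono v0 c qpos by (auto simp: D_def)
  have hy0: "h y0 = v0" using c by (simp add: h_def y0_def v0_def)
  obtain e where e: "e > 0" "\<forall>z. dist z v0 < e \<longrightarrow> psi F f z > 0"
  proof -
    have ic: "(psi F f \<longlongrightarrow> psi F f v0) (at v0)" using L(4) v0(1,2) isCont_def by blast
    have "\<forall>\<^sub>F z in at v0. psi F f z > 0"
      using order_tendstoD(1)[OF ic, of 0] v0 c qpos by auto
    then obtain e where "e > 0" "\<forall>z. z \<noteq> v0 \<and> dist z v0 < e \<longrightarrow> psi F f z > 0"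
      unfolding eventually_at by auto
    thus ?thesis using that v0 c qpos by (metis divide_pos_pos)
  qed
  define d where "d = min (e/2) (min (v0/2) ((1 - v0)/2))"
  have d: "d > 0" using e v0 by (auto simp: d_def)
  have zin: "0 < z \<and> z < 1 \<and> psi F f z > 0" if "\<bar>z - v0\<bar> \<le> d" for z
  proof -
    have "dist z v0 < e" using that e(1) by (auto simp: d_def dist_real_def)
    moreover have "0 < z" "z < 1" using that v0 by (auto simp: d_def abs_if split: if_splits)
    ultimately show ?thesis using e by auto
  qed
  have hc: "isCont h (psi F f v0)"
  proof (rule isCont_inverse_function[where f="psi F f" and g=h and x=v0, OF d])
    fix z assume "\<bar>z - v0\<bar> \<le> d"
    thus "h (psi F f z) = z" using zin L(2) by (auto simp: h_def)
  next
    fix z assume "\<bar>z - v0\<bar> \<le> d"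
    thus "isCont (psi F f) z" using zin L(4) by auto
  qed
  have hd: "(h has_real_derivative inverse D) (at y0)"
  proof (rule DERIV_inverse_function[where a=0 and b=1])
    show "(psi F f has_real_derivative D) (at (h y0))" using hy0 L(3) v0 by (simp add: D_def)
    show "D \<noteq> 0" using Dpos by simp
    show "0 < y0" "y0 < 1" using y0 by auto
    fix y :: real assume y: "0 < y" "y < 1"
    hence "c < c / y" using c by (simp add: field_simps)
    thus "psi F f (h y) = y" using L(1) y c by (auto simp: h_def)
  next
    show "isCont h y0" using hc v0 by (simp add: y0_def)
  qed
  have inner: "((\<lambda>q. c / q) has_real_derivative - c / q0^2) (at q0)"
    using qpos by (auto intro!: derivative_eq_intros simp: power2_eq_square field_simps)
  have comp: "((\<lambda>q. h (c / q)) has_real_derivative inverse D * (- c / q0^2)) (at q0)"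
    using DERIV_chain2[OF hd[unfolded y0_def] inner] .
  have eq: "(\<lambda>q. h (c / q)) = pbar F c" using c by (auto simp: h_def fun_eq_iff)
  have neg: "inverse D * (- c / q0^2) < 0" using Dpos c qpos
    by (simp add: mult_pos_neg)
  show "\<exists>D. (pbar F c has_real_derivative D) (at q0 within {ql..qh}) \<and> D < 0"
    using comp neg eq has_field_derivative_at_within by metis
qed

end
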